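(* Let $d\geqslant2$ and let $\mu$ be a Borel probability measure on $GL(d,\mathbb R)$. Assume either that (A1), (A2) hold and $s\in I_\mu^+$, or that (A1), (A2), (A3) hold and $s\in(-s_0,0)$, where $s_0>0$ is a sufficiently small constant (depending on $\mu$). Then for every $y\in(\mathbb P^{d-1})^*$ and every bounded measurable function $\varphi$ on $\mathbb P^{d-1}$, $$\upsilon_s^y(\varphi)=\int_{GL(d,\mathbb R)} g\upsilon_s^{g^*y}(\varphi)\,q_s^*(g,y)\,\mu(dg).$$
   Context: For $x=\mathbb Rv\in\mathbb P^{d-1}$, $y=\mathbb Rf\in(\mathbb P^{d-1})^*$: $\delta(x,y)=\frac{|\langle f,v\rangle|}{|f||v|}$, $\sigma(g,x)=\log\frac{|gv|}{|v|}$, $\sigma(g^*,y)=\log\frac{|g^*f|}{|f|}$ with $g^*$ the adjoint of $g$ acting on $(\mathbb P^{d-1})^*$. $I_\mu^+=\{s\geqslant0:\int\|g\|^s\mu(dg)<\infty\}$. $P_s\varphi(x)=\int e^{s\sigma(g,x)}\varphi(gx)\mu(dg)$. $\Gamma_\mu$ is the smallest closed subsemigroup containing $\operatorname{supp}\mu$; (A1): no finite union of proper subspaces of $\mathbb R^d$ is $\Gamma_\mu$-invariant; (A2): $\Gamma_\mu$ contains a matrix with an algebraically simple eigenvalue of modulus strictly larger than all others; (A3): $\int N(g)^\alpha\mu(dg)<\infty$ for some $\alpha\in(0,1)$, $N(g)=\max\{\|g\|,\|g^{-1}\|\}$. In each case there is a number $\kappa(s)>0$ and a unique probability measure $\nu_s$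 on $\mathbb P^{d-1}$ with $\int P_s\varphi d\nu_s=\kappa(s)\int\varphi d\nu_s$. Set $r_s^*(y)=\int_{\mathbb P^{d-1}}\delta(x,y)^s\nu_s(dx)$ (a positive continuous function), $\upsilon_s^y(\varphi)=\int\varphi(x)\frac{\delta(x,y)^s}{r_s^*(y)}\nu_s(dx)$, $g\upsilon_s^y(\varphi)=\int\varphi(gx)\upsilon_s^y(dx)$, and $q_s^*(g,y)=\frac{e^{s\sigma(g^*,y)}}{\kappa(s)}\frac{r_s^*(g^*y)}{r_s^*(y)}$. *)

theory Defs
  imports "HOL-Analysis.Analysis" "HOL-Probability.Probability_Measure" "HOL-Computational_Algebra.Polynomial"
begin

typedef ('n::finite) proj = "{L :: (real^'n) set. \<exists>v. v \<noteq> 0 \<and> L = range (\<lambda>c::real. c *\<^sub>R v)}"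
  by (rule exI[of _ "range (\<lambda>c::real. c *\<^sub>R (1::real^'n))"]) (auto intro!: exI[of _ "1::real^'n"])

definition line :: "real^'n::finite \<Rightarrow> 'n proj" where
  "line v = Abs_proj (range (\<lambda>c::real. c *\<^sub>R v))"

definition rep :: "'n::finite proj \<Rightarrow> real^'n" where
  "rep x = (SOME v. v \<noteq> 0 \<and> v \<in> Rep_proj x)"

text \<open>Borel sigma-algebra of the quotient topology on P^{d-1}: sets whose preimage in
  R^d minus 0 is Borel.\<close>
definition proj_borel :: "'n::finite proj measure" where
  "proj_borel = sigma UNIV {A. {v. v \<noteq> 0 \<and> line v \<in> A} \<in> sets borel}"

definition proj_continuous :: "('n::finite proj \<Rightarrow> real) \<Rightarrow> bool" where
  "proj_continuous \<phi> \<longleftrightarrow> continuous_on (UNIV - {0}) (\<lambda>v. \<phi> (line v))"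

text \<open>Action of a matrix on P^{d-1}. The dual projective space is identified with P^{d-1}
  via the standard inner product, so the adjoint g* acts as the transpose.\<close>
definition act :: "real^'n^'n \<Rightarrow> 'n::finite proj \<Rightarrow> 'n proj" where
  "act g x = line (g *v rep x)"

definition delta :: "'n::finite proj \<Rightarrow> 'n proj \<Rightarrow> real" where
  "delta x y = \<bar>rep y \<bullet> rep x\<bar> / (norm (rep y) * norm (rep x))"

definition cocycle :: "real^'n^'n \<Rightarrow> 'n::finite proj \<Rightarrow> real" where
  "cocycle g x = ln (norm (g *v rep x) / norm (rep x))"

text \<open>Real power t^s for t \<ge> 0 with the convention 0^0 = 1.\<close>
definition rpow :: "real \<Rightarrow> real \<Rightarrow> real" where
  "rpow t s = (if s = 0 then 1 else t powr s)"

definition opnorm :: "real^'n^'n::finite \<Rightarrow> real" where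
  "opnorm g = onorm (\<lambda>x. g *v x)"

definition Nmat :: "real^'n^'n::finite \<Rightarrow> real" where
  "Nmat g = max (opnorm g) (opnorm (matrix_inv g))"

definition I_plus :: "(real^'n^'n::finite) measure \<Rightarrow> real set" where
  "I_plus \<mu> = {s. s \<ge> 0 \<and> (\<integral>\<^sup>+ g. ennreal (opnorm g powr s) \<partial>\<mu>) < \<infinity>}"

definition GL :: "(real^'n^'n::finite) set" where
  "GL = {g. invertible g}"

definition supp_GL :: "(real^'n^'n::finite) measure \<Rightarrow> (real^'n^'n) set" where
  "supp_GL \<mu> = {g \<in> GL. \<forall>U. open U \<longrightarrow> g \<in> U \<longrightarrow> emeasure \<mu> U > 0}"

definition Gamma :: "(real^'n^'n::finite) measure \<Rightarrow> (real^'n^'n) set" where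
  "Gamma \<mu> = \<Inter>{S. S \<subseteq> GL \<and> closedin (top_of_set GL) S \<and>
                    (\<forall>a\<in>S. \<forall>b\<in>S. a ** b \<in> S) \<and> supp_GL \<mu> \<subseteq> S}"

definition A1 :: "(real^'n^'n::finite) measure \<Rightarrow> bool" where
  "A1 \<mu> \<longleftrightarrow> \<not> (\<exists>\<V> :: (real^'n) set set. finite \<V> \<and> \<V> \<noteq> {} \<and>
       (\<forall>V\<in>\<V>. subspace V \<and> V \<noteq> {0} \<and> V \<noteq> UNIV) \<and>
       (\<forall>g\<in>Gamma \<mu>. (\<lambda>v. g *v v) ` (\<Union>\<V>) = \<Union>\<V>))"

definition charpoly :: "real^'n^'n::finite \<Rightarrow> complex poly" where
  "charpoly g = det (\<chi> i j. (if i = j then [:0, 1:] else 0) - [:complex_of_real (g $ i $ j):])"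

definition A2 :: "(real^'n^'n::finite) measure \<Rightarrow> bool" where
  "A2 \<mu> \<longleftrightarrow> (\<exists>g\<in>Gamma \<mu>. \<exists>ev. poly (charpoly g) ev = 0 \<and> order ev (charpoly g) = 1 \<and>
       (\<forall>ev2. poly (charpoly g) ev2 = 0 \<longrightarrow> ev2 \<noteq> ev \<longrightarrow> cmod ev2 < cmod ev))"

definition A3 :: "(real^'n^'n::finite) measure \<Rightarrow> bool" where
  "A3 \<mu> \<longleftrightarrow> (\<exists>\<alpha>. 0 < \<alpha> \<and> \<alpha> < 1 \<and> (\<integral>\<^sup>+ g. ennreal (Nmat g powr \<alpha>) \<partial>\<mu>) < \<infinity>)"

definition Ps :: "(real^'n^'n::finite) measure \<Rightarrow> real \<Rightarrow> ('n proj \<Rightarrow> real) \<Rightarrow> 'n proj \<Rightarrow> real" where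
  "Ps \<mu> s \<phi> x = (\<integral>g. exp (s * cocycle g x) * \<phi> (act g x) \<partial>\<mu>)"

text \<open>nu is a probability measure on P^{d-1} with  nu(P_s phi) = kappa nu(phi)  for continuous phi,
  kappa > 0 (this characterizes kappa(s) and nu_s, by uniqueness).\<close>
definition eigen :: "(real^'n^'n::finite) measure \<Rightarrow> real \<Rightarrow> 'n proj measure \<Rightarrow> real \<Rightarrow> bool" where
  "eigen \<mu> s \<nu> \<kappa> \<longleftrightarrow> prob_space \<nu> \<and> sets \<nu> = sets proj_borel \<and> \<kappa> > 0 \<and>
     (\<forall>\<phi>. proj_continuous \<phi> \<longrightarrow> (\<integral>x. Ps \<mu> s \<phi> x \<partial>\<nu>) = \<kappa> * (\<integral>x. \<phi> x \<partial>\<nu>))"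

definition rstar :: "real \<Rightarrow> 'n::finite proj measure \<Rightarrow> 'n proj \<Rightarrow> real" where
  "rstar s \<nu> y = (\<integral>x. rpow (delta x y) s \<partial>\<nu>)"

definition upsilon :: "real \<Rightarrow> 'n::finite proj measure \<Rightarrow> 'n proj \<Rightarrow> ('n proj \<Rightarrow> real) \<Rightarrow> real" where
  "upsilon s \<nu> y \<phi> = (\<integral>x. \<phi> x * rpow (delta x y) s / rstar s \<nu> y \<partial>\<nu>)"

definition g_upsilon :: "real^'n^'n \<Rightarrow> real \<Rightarrow> 'n::finite proj measure \<Rightarrow> 'n proj \<Rightarrow> ('n proj \<Rightarrow> real) \<Rightarrow> real" where
  "g_upsilon g s \<nu> y \<phi> = upsilon s \<nu> y (\<lambda>x. \<phi> (act g x))"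

definition qstar :: "real \<Rightarrow> real \<Rightarrow> 'n::finite proj measure \<Rightarrow> real^'n^'n \<Rightarrow> 'n proj \<Rightarrow> real" where
  "qstar s \<kappa> \<nu> g y = exp (s * cocycle (transpose g) y) / \<kappa> *
                       (rstar s \<nu> (act (transpose g) y) / rstar s \<nu> y)"

end

theory Submission
  imports Defs
begin

lemma Rep_line: "v \<noteq> 0 \<Longrightarrow> Rep_proj (line v) = range (\<lambda>c::real. c *\<^sub>R v)"
  unfolding line_def by (rule Abs_proj_inverse) auto

lemma rep_props: "rep x \<noteq> 0 \<and> rep x \<in> Rep_proj x"
proof -
  obtain v where v: "v \<noteq> 0" "Rep_proj x = range (\<lambda>c::real. c *\<^sub>R v)"
    using Rep_proj[of x] by auto
  have "v \<noteq> 0 \<and> v \<in> Rep_proj x" using v by (auto intro: range_eqI[of _ _ 1])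
  then show ?thesis unfolding rep_def by (rule someI)
qed

lemma rep_nz[simp]: "rep x \<noteq> 0" using rep_props by blast

lemma line_scale: "c \<noteq> 0 \<Longrightarrow> line (c *\<^sub>R v) = line v"
proof -
  assume c: "c \<noteq> 0"
  have "range (\<lambda>d::real. d *\<^sub>R (c *\<^sub>R v)) = range (\<lambda>d. d *\<^sub>R v)"
  proof (intro set_eqI iffI)
    fix w assume "w \<in> range (\<lambda>d::real. d *\<^sub>R (c *\<^sub>R v))"
    then obtain d where "w = d *\<^sub>R (c *\<^sub>R v)" by auto
    then have "w = (d * c) *\<^sub>R v" by simp
    then show "w \<in> range (\<lambda>d. d *\<^sub>R v)" by blast
  next
    fix w assume "w \<in> range (\<lambda>d::real. d *\<^sub>R v)"
    then obtain d where "w = d *\<^sub>R v" by auto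
    then have "w = (d / c) *\<^sub>R (c *\<^sub>R v)" using c by simp
    then show "w \<in> range (\<lambda>d::real. d *\<^sub>R (c *\<^sub>R v))" by (rule range_eqI)
  qed
  then show ?thesis unfolding line_def by simp
qed


lemma rep_line: "v \<noteq> 0 \<Longrightarrow> \<exists>c. c \<noteq> 0 \<and> rep (line v) = c *\<^sub>R v"
proof -
  assume v: "v \<noteq> 0"
  have "rep (line v) \<in> range (\<lambda>c::real. c *\<^sub>R v)" using rep_props[of "line v"] Rep_line[OF v] by auto
  then obtain c where c: "rep (line v) = c *\<^sub>R v" by auto
  then have "c \<noteq> 0" using rep_nz[of "line v"] by auto
  with c show ?thesis by blast
qed

lemma line_rep[simp]: "line (rep x) = x"
proof -
  obtain v where v: "v \<noteq> 0" "Rep_proj x = range (\<lambda>c::real. c *\<^sub>R v)"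
    using Rep_proj[of x] by auto
  then obtain c where c: "rep x = c *\<^sub>R v" using rep_props[of x] by auto
  then have "c \<noteq> 0" using rep_nz[of x] by auto
  then have "line (rep x) = line v" using c line_scale by simp
  also have "\<dots> = x" unfolding line_def using v(2) by (metis Rep_proj_inverse)
  finally show ?thesis .
qed

lemma line_eq_scale: "v \<noteq> 0 \<Longrightarrow> line v = x \<Longrightarrow> \<exists>c. c \<noteq> 0 \<and> rep x = c *\<^sub>R v"
  using rep_line by blast


definition pre :: "'n::finite proj set \<Rightarrow> (real^'n) set" where
  "pre A = {v. v \<noteq> 0 \<and> line v \<in> A}"

lemma sets_proj_borel: "sets proj_borel = {A. pre A \<in> sets borel}"
proof -
  have sa: "sigma_algebra UNIV {A::'a proj set. pre A \<in> sets borel}"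
    unfolding sigma_algebra_iff2
  proof (intro conjI allI ballI impI)
    show "{} \<in> {A. pre A \<in> sets borel}" by (simp add: pre_def)
  next
    fix s :: "'a proj set" assume "s \<in> {A. pre A \<in> sets borel}"
    then have "pre s \<in> sets borel" by simp
    moreover have "pre (UNIV - s) = (UNIV - {0}) - pre s" by (auto simp: pre_def)
    ultimately show "UNIV - s \<in> {A. pre A \<in> sets borel}" by auto
  next
    fix A :: "nat \<Rightarrow> 'a proj set" assume "range A \<subseteq> {A. pre A \<in> sets borel}"
    then have "\<And>i. pre (A i) \<in> sets borel" by auto
    moreover have "pre (\<Union>i. A i) = (\<Union>i. pre (A i))" by (auto simp: pre_def)
    ultimately show "(\<Union>i. A i) \<in> {A. pre A \<in> sets borel}" by auto
  qed auto
  show ?thesis unfolding proj_borel_def pre_def[symmetric]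
    using sigma_algebra.sigma_sets_eq[OF sa] by (simp add: sets_measure_of)
qed

lemma space_proj_borel[simp]: "space proj_borel = UNIV"
  unfolding proj_borel_def by simp

lemma measurable_proj_borelI:
  assumes "\<And>B. B \<in> sets N \<Longrightarrow> {v. v \<noteq> 0 \<and> f (line v) \<in> B} \<in> sets borel"
  and "f \<in> UNIV \<rightarrow> space N"
  shows "f \<in> measurable proj_borel N"
  unfolding measurable_def using assms by (auto simp: sets_proj_borel pre_def)

lemma measurable_line[measurable]: "line \<in> measurable borel proj_borel"
proof (rule measurableI)
  fix A :: "'a proj set" assume "A \<in> sets proj_borel"
  then have p: "pre A \<in> sets borel" by (simp add: sets_proj_borel)
  have "line -` A \<inter> space borel = pre A \<union> (if line 0 \<in> A then {0} else {})"
    by (auto simp: pre_def)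
  then show "line -` A \<inter> space borel \<in> sets borel" using p by auto
qed auto


lemma vec_measurableI:
  fixes f :: "'a \<Rightarrow> 'b::euclidean_space^'n::finite"
  assumes "\<And>i. (\<lambda>x. f x $ i) \<in> borel_measurable M"
  shows "f \<in> borel_measurable M"
proof (rule borel_measurable_euclidean_space[THEN iffD2], intro ballI)
  fix b :: "'b^'n" assume "b \<in> Basis"
  then obtain i u where b: "b = axis i u" "u \<in> Basis" by (auto simp: Basis_vec_def)
  have "(\<lambda>x. f x \<bullet> b) = (\<lambda>x. f x $ i \<bullet> u)" unfolding b by (simp add: inner_axis)
  moreover have "(\<lambda>x. f x $ i \<bullet> u) \<in> borel_measurable M"
    using assms[of i] by (intro borel_measurable_inner) simp_all
  ultimately show "(\<lambda>x. f x \<bullet> b) \<in> borel_measurable M" by simp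
qed

lemma mat_measurableI:
  fixes f :: "'a \<Rightarrow> real^'n::finite^'m::finite"
  assumes "\<And>i j. (\<lambda>x. f x $ i $ j) \<in> borel_measurable M"
  shows "f \<in> borel_measurable M"
  by (intro vec_measurableI assms)

lemma nth_measurable'[measurable (raw)]:
  fixes f :: "'a \<Rightarrow> 'b::euclidean_space^'n::finite"
  shows "f \<in> borel_measurable M \<Longrightarrow> (\<lambda>x. f x $ i) \<in> borel_measurable M"
proof -
  assume f: "f \<in> borel_measurable M"
  have "(\<lambda>x::'b^'n. x $ i) \<in> borel_measurable borel"
    by (intro borel_measurable_continuous_onI continuous_intros)
  then show ?thesis by (rule measurable_compose[OF f])
qed

definition qv :: "real^'n::finite \<Rightarrow> real^'n^'n" where
  "qv v = (\<chi> i j. v$i * v$j / (norm v)^2)"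

definition q :: "'n::finite proj \<Rightarrow> real^'n^'n" where
  "q x = qv (rep x)"

definition Jd :: "real^'n::finite^'n \<Rightarrow> 'n" where
  "Jd M = (SOME j. M$j$j \<noteq> 0)"

definition sig :: "real^'n::finite^'n \<Rightarrow> real^'n" where
  "sig M = (\<chi> i. M$i$(Jd M))"

definition sec :: "'n::finite proj \<Rightarrow> real^'n" where
  "sec x = sig (q x)"

lemma qv_scale: assumes c: "c \<noteq> 0" shows "qv (c *\<^sub>R v) = qv v"
proof -
  have "c * v$i * (c * v$j) / ((\<bar>c\<bar> * norm v)\<^sup>2) = v$i * v$j / (norm v)\<^sup>2" for i j
  proof -
    have "c * v$i * (c * v$j) / ((\<bar>c\<bar> * norm v)\<^sup>2) = (c\<^sup>2 * (v$i * v$j)) / (c\<^sup>2 * (norm v)\<^sup>2)"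
      by (simp only: power_mult_distrib power2_abs) (simp add: power2_eq_square algebra_simps)
    also have "\<dots> = v$i * v$j / (norm v)\<^sup>2" using c by simp
    finally show ?thesis .
  qed
  then show ?thesis by (simp add: qv_def vec_eq_iff)
qed

lemma q_line: "v \<noteq> 0 \<Longrightarrow> q (line v) = qv v"
  using rep_line[of v] qv_scale unfolding q_def by auto

lemma qv_measurable[measurable]: "qv \<in> borel_measurable borel"
  unfolding qv_def by (intro mat_measurableI) simp

lemma q_measurable[measurable]: "q \<in> borel_measurable proj_borel"
proof (rule measurable_proj_borelI)
  fix B :: "(real^'a^'a) set" assume B: "B \<in> sets borel"
  have "{v. v \<noteq> 0 \<and> q (line v) \<in> B} = (UNIV - {0}) \<inter> (qv -` B \<inter> space borel)"
    by (auto simp: q_line)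
  also have "\<dots> \<in> sets borel" using measurable_sets[OF qv_measurable B] by auto
  finally show "{v. v \<noteq> 0 \<and> q (line v) \<in> B} \<in> sets borel" .
qed auto

lemma Jd_measurable: "Jd \<in> measurable borel (count_space UNIV)"
proof -
  define D where "D = (\<lambda>M::real^'a^'a. (\<lambda>j. M$j$j \<noteq> 0))"
  have Jd: "Jd = (\<lambda>P. SOME j. P j) \<circ> D" by (auto simp: D_def Jd_def fun_eq_iff)
  have "D \<in> measurable borel (count_space UNIV)"
    unfolding measurable_count_space_eq2_countable
  proof (intro conjI ballI)
    fix P :: "'a \<Rightarrow> bool"
    have "Measurable.pred borel (\<lambda>M::real^'a^'a. \<forall>j. (M$j$j \<noteq> 0) = P j)" by measurable
    moreover have "D -` {P} \<inter> space borel = {M. \<forall>j. (M$j$j \<noteq> 0) = P j}"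
      by (auto simp: D_def fun_eq_iff)
    ultimately show "D -` {P} \<inter> space borel \<in> sets borel" by (simp add: pred_def)
  qed auto
  then show ?thesis unfolding Jd by (rule measurable_comp) simp
qed

lemma sig_measurable[measurable]: "sig \<in> borel_measurable borel"
  unfolding sig_def
proof (intro vec_measurableI)
  fix i
  show "(\<lambda>x::real^'a^'a. (\<chi> i. x $ i $ Jd x) $ i) \<in> borel_measurable borel"
    by simp (rule measurable_compose_countable[OF _ Jd_measurable], simp)
qed

lemma sec_measurable[measurable]: "sec \<in> borel_measurable proj_borel"
  unfolding sec_def by simp

lemma sec_rep: "\<exists>c. c \<noteq> 0 \<and> sec x = c *\<^sub>R rep x"
proof -
  define u where "u = rep x"
  have u: "u \<noteq> 0" by (simp add: u_def)
  then obtain j where j: "u $ j \<noteq> 0" by (auto simp: vec_eq_iff)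
  have nu: "norm u \<noteq> 0" using u by simp
  have ex: "\<exists>j. qv u $ j $ j \<noteq> 0" using j nu by (auto simp: qv_def intro!: exI[of _ j])
  define k where "k = Jd (qv u)"
  have k: "qv u $ k $ k \<noteq> 0" unfolding k_def Jd_def by (rule someI_ex[OF ex])
  then have uk: "u $ k \<noteq> 0" by (auto simp: qv_def)
  have "sec x = (\<chi> i. qv u $ i $ k)" by (simp add: sec_def q_def sig_def u_def k_def)
  also have "\<dots> = (u $ k / (norm u)^2) *\<^sub>R u" by (simp add: qv_def vec_eq_iff mult.commute)
  finally have "sec x = (u $ k / (norm u)^2) *\<^sub>R u" .
  moreover have "u $ k / (norm u)^2 \<noteq> 0" using uk nu by simp
  ultimately show ?thesis unfolding u_def by blast
qed

lemma rep_sec: "\<exists>c. c \<noteq> 0 \<and> rep x = c *\<^sub>R sec x"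
proof -
  obtain c where "c \<noteq> 0" "sec x = c *\<^sub>R rep x" using sec_rep by blast
  then have "rep x = (1/c) *\<^sub>R sec x" by simp
  with \<open>c \<noteq> 0\<close> show ?thesis by (intro exI[of _ "1/c"]) simp
qed

lemma sec_nz[simp]: "sec x \<noteq> 0"
  using sec_rep[of x] by auto

lemma line_sec[simp]: "line (sec x) = x"
  using sec_rep[of x] line_scale line_rep by metis


lemma act_sec: "act g x = line (g *v sec x)"
proof -
  obtain c where "c \<noteq> 0" "rep x = c *\<^sub>R sec x" using rep_sec by blast
  then show ?thesis unfolding act_def by (simp add: matrix_vector_mult_scaleR line_scale)
qed

lemma cocycle_sec: "cocycle g x = ln (norm (g *v sec x) / norm (sec x))"
proof -
  obtain c where "c \<noteq> 0" "rep x = c *\<^sub>R sec x" using rep_sec by blast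
  then show ?thesis unfolding cocycle_def by (simp add: matrix_vector_mult_scaleR)
qed

lemma delta_sec: "delta x y = \<bar>sec y \<bullet> sec x\<bar> / (norm (sec y) * norm (sec x))"
proof -
  obtain c where c: "c \<noteq> 0" "rep x = c *\<^sub>R sec x" using rep_sec by blast
  obtain d where d: "d \<noteq> 0" "rep y = d *\<^sub>R sec y" using rep_sec by blast
  have "\<bar>rep y \<bullet> rep x\<bar> / (norm (rep y) * norm (rep x))
      = (\<bar>c\<bar> * \<bar>d\<bar> * \<bar>sec y \<bullet> sec x\<bar>) / (\<bar>c\<bar> * \<bar>d\<bar> * (norm (sec y) * norm (sec x)))"
    using c d by (simp add: abs_mult ac_simps)
  also have "\<dots> = \<bar>sec y \<bullet> sec x\<bar> / (norm (sec y) * norm (sec x))"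
    using c d by simp
  finally show ?thesis unfolding delta_def .
qed

lemma sec_line: "v \<noteq> 0 \<Longrightarrow> \<exists>c. c \<noteq> 0 \<and> sec (line v) = c *\<^sub>R v"
proof -
  assume v: "v \<noteq> 0"
  obtain c where c: "c \<noteq> 0" "sec (line v) = c *\<^sub>R rep (line v)" using sec_rep by blast
  obtain d where d: "d \<noteq> 0" "rep (line v) = d *\<^sub>R v" using rep_line[OF v] by blast
  show ?thesis using c d by (intro exI[of _ "c * d"]) simp
qed

lemma delta_line1: "v \<noteq> 0 \<Longrightarrow> delta (line v) y = \<bar>sec y \<bullet> v\<bar> / (norm (sec y) * norm v)"
proof -
  assume v: "v \<noteq> 0"
  obtain c where c: "c \<noteq> 0" "sec (line v) = c *\<^sub>R v" using sec_line[OF v] by blast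
  have "\<bar>sec y \<bullet> sec (line v)\<bar> / (norm (sec y) * norm (sec (line v)))
      = (\<bar>c\<bar> * \<bar>sec y \<bullet> v\<bar>) / (\<bar>c\<bar> * (norm (sec y) * norm v))"
    using c by (simp add: abs_mult ac_simps)
  also have "\<dots> = \<bar>sec y \<bullet> v\<bar> / (norm (sec y) * norm v)" using c by simp
  finally show ?thesis by (simp add: delta_sec)
qed

lemma delta_line2: "v \<noteq> 0 \<Longrightarrow> delta x (line v) = \<bar>v \<bullet> sec x\<bar> / (norm v * norm (sec x))"
proof -
  assume v: "v \<noteq> 0"
  obtain c where c: "c \<noteq> 0" "sec (line v) = c *\<^sub>R v" using sec_line[OF v] by blast
  have "\<bar>sec (line v) \<bullet> sec x\<bar> / (norm (sec (line v)) * norm (sec x))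
      = (\<bar>c\<bar> * \<bar>v \<bullet> sec x\<bar>) / (\<bar>c\<bar> * (norm v * norm (sec x)))"
    using c by (simp add: abs_mult ac_simps)
  also have "\<dots> = \<bar>v \<bullet> sec x\<bar> / (norm v * norm (sec x))" using c by simp
  finally show ?thesis by (simp add: delta_sec)
qed

lemma inv_nz: "invertible g \<Longrightarrow> v \<noteq> 0 \<Longrightarrow> (g::real^'n::finite^'n) *v v \<noteq> 0"
  using inj_matrix_vector_mult[of g] by (metis injD matrix_vector_mult_0_right)

lemma exp_ln_powr: fixes a s :: real assumes "a > 0" shows "exp (s * ln a) = a powr s"
proof -
  have "a \<noteq> 0" using assms by linarith
  then show ?thesis by (simp add: powr_def)
qed

lemma key_identity:
  fixes g :: "real^'n::finite^'n"
  assumes g: "invertible g"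
  shows "rpow (delta (act g x) y) s * exp (s * cocycle g x)
       = rpow (delta x (act (transpose g) y)) s * exp (s * cocycle (transpose g) y)"
proof (cases "s = 0")
  case True then show ?thesis by (simp add: rpow_def)
next
  case False
  define v where "v = sec x"
  define f where "f = sec y"
  have v: "v \<noteq> 0" and f: "f \<noteq> 0" by (simp_all add: v_def f_def)
  have gv: "g *v v \<noteq> 0" using inv_nz[OF g v] .
  have gf: "transpose g *v f \<noteq> 0" using inv_nz[OF transpose_invertible[OF g] f] .
  have dot: "f \<bullet> (g *v v) = (transpose g *v f) \<bullet> v"
    by (simp add: dot_lmul_matrix)
  have L: "delta (act g x) y = \<bar>f \<bullet> (g *v v)\<bar> / (norm f * norm (g *v v))"
    unfolding act_sec v_def[symmetric] f_def using delta_line1[OF gv] by simp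
  have R: "delta x (act (transpose g) y) = \<bar>(transpose g *v f) \<bullet> v\<bar> / (norm (transpose g *v f) * norm v)"
    unfolding act_sec[of "transpose g" y] f_def[symmetric] v_def using delta_line2[OF gf] by simp
  have c1: "exp (s * cocycle g x) = (norm (g *v v) / norm v) powr s"
    unfolding cocycle_sec v_def[symmetric] using v gv by (intro exp_ln_powr) simp
  have c2: "exp (s * cocycle (transpose g) y) = (norm (transpose g *v f) / norm f) powr s"
    unfolding cocycle_sec f_def[symmetric] using f gf by (intro exp_ln_powr) simp
  have "rpow (delta (act g x) y) s * exp (s * cocycle g x)
      = (\<bar>f \<bullet> (g *v v)\<bar> / (norm f * norm (g *v v)) * (norm (g *v v) / norm v)) powr s"
    unfolding L c1 rpow_def using False by (simp only: if_False powr_mult)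
  also have "\<bar>f \<bullet> (g *v v)\<bar> / (norm f * norm (g *v v)) * (norm (g *v v) / norm v)
      = \<bar>f \<bullet> (g *v v)\<bar> / (norm f * norm v)" using gv by simp
  also have "\<dots> = \<bar>(transpose g *v f) \<bullet> v\<bar> / (norm (transpose g *v f) * norm v) * (norm (transpose g *v f) / norm f)"
    using gf dot by simp
  also have "(\<dots>) powr s = rpow (delta x (act (transpose g) y)) s * exp (s * cocycle (transpose g) y)"
    unfolding R c2 rpow_def using False by (simp only: if_False powr_mult)
  finally show ?thesis .
qed

lemma mv_measurable[measurable (raw)]:
  fixes f :: "'a \<Rightarrow> real^'n::finite^'m::finite" and h :: "'a \<Rightarrow> real^'n"
  shows "f \<in> borel_measurable M \<Longrightarrow> h \<in> borel_measurable M \<Longrightarrow> (\<lambda>x. f x *v h x) \<in> borel_measurable M"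
  by (intro vec_measurableI) (simp add: matrix_vector_mult_def)

lemma transpose_measurable[measurable (raw)]:
  fixes f :: "'a \<Rightarrow> real^'n::finite^'m::finite"
  shows "f \<in> borel_measurable M \<Longrightarrow> (\<lambda>x. transpose (f x)) \<in> borel_measurable M"
  by (intro mat_measurableI) (simp add: transpose_def)

lemma sec_measurable'[measurable (raw)]:
  "h \<in> measurable M proj_borel \<Longrightarrow> (\<lambda>x. sec (h x)) \<in> borel_measurable M"
  by (rule measurable_compose[OF _ sec_measurable])

lemma act_measurable[measurable (raw)]:
  assumes [measurable]: "f \<in> borel_measurable M" "h \<in> measurable M proj_borel"
  shows "(\<lambda>x. act (f x) (h x)) \<in> measurable M proj_borel"
  unfolding act_sec by measurable

lemma cocycle_measurable[measurable (raw)]: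
  assumes [measurable]: "f \<in> borel_measurable M" "h \<in> measurable M proj_borel"
  shows "(\<lambda>x. cocycle (f x) (h x)) \<in> borel_measurable M"
  unfolding cocycle_sec by measurable

lemma delta_measurable[measurable (raw)]:
  assumes [measurable]: "f \<in> measurable M proj_borel" "h \<in> measurable M proj_borel"
  shows "(\<lambda>x. delta (f x) (h x)) \<in> borel_measurable M"
  unfolding delta_sec by measurable

lemma rpow_measurable[measurable (raw)]:
  "f \<in> borel_measurable M \<Longrightarrow> (\<lambda>x. rpow (f x) s) \<in> borel_measurable M"
  by (cases "s = 0") (simp_all add: rpow_def)


lemma finite_measure_eq_cont:
  fixes P Q :: "'a::euclidean_space measure"
  assumes sP: "sets P = sets borel" and sQ: "sets Q = sets borel"
    and fP: "finite_measure P" and fQ: "finite_measure Q"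
    and eq: "\<And>f. continuous_on UNIV f \<Longrightarrow> (\<And>x. 0 \<le> f x \<and> f x \<le> 1) \<Longrightarrow>
              (\<integral>\<^sup>+x. ennreal (f x) \<partial>P) = (\<integral>\<^sup>+x. ennreal (f x) \<partial>Q)"
  shows "P = Q"
proof -
  have spP: "space P = UNIV" using sets_eq_imp_space_eq[OF sP] by simp
  have spQ: "space Q = UNIV" using sets_eq_imp_space_eq[OF sQ] by simp
  have beq: "\<And>f::'a \<Rightarrow> real. continuous_on UNIV f \<Longrightarrow> (\<And>x. 0 \<le> f x \<and> f x \<le> 1) \<Longrightarrow>
              (\<integral>x. f x \<partial>P) = (\<integral>x. f x \<partial>Q)"
  proof -
    fix f :: "'a \<Rightarrow> real" assume c: "continuous_on UNIV f" and b: "\<And>x. 0 \<le> f x \<and> f x \<le> 1"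
    have mf: "f \<in> borel_measurable borel" using c by (rule borel_measurable_continuous_onI)
    have mfP: "f \<in> borel_measurable P" using mf unfolding measurable_cong_sets[OF sP refl] .
    have mfQ: "f \<in> borel_measurable Q" using mf unfolding measurable_cong_sets[OF sQ refl] .
    have iP: "integrable P f"
      by (rule finite_measure.integrable_const_bound[OF fP, where B=1]) (use b mfP in auto)
    have iQ: "integrable Q f"
      by (rule finite_measure.integrable_const_bound[OF fQ, where B=1]) (use b mfQ in auto)
    have "ennreal (\<integral>x. f x \<partial>P) = ennreal (\<integral>x. f x \<partial>Q)"
      using eq[OF c b] nn_integral_eq_integral[OF iP] nn_integral_eq_integral[OF iQ] b by simp
    then show "(\<integral>x. f x \<partial>P) = (\<integral>x. f x \<partial>Q)"
      using b by (simp add: integral_nonneg ennreal_inj)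
  qed
  have closed_eq: "emeasure P C = emeasure Q C" if C: "closed C" for C
  proof (cases "C = {}")
    case True then show ?thesis by simp
  next
    case False
    define s where "s = (\<lambda>(n::nat) x. max 0 (1 - real n * infdist x C))"
    have sc: "continuous_on UNIV (s n)" for n unfolding s_def by (intro continuous_intros)
    have sb: "0 \<le> s n x \<and> s n x \<le> 1" for n x unfolding s_def using infdist_nonneg[of x C] by auto
    have lim: "(\<lambda>n. s n x) \<longlonglongrightarrow> indicator C x" for x
    proof (cases "x \<in> C")
      case True
      then have "infdist x C = 0" using in_closed_iff_infdist_zero[OF C False] by simp
      then show ?thesis using True by (simp add: s_def)
    next
      case nC: False
      then have d: "infdist x C > 0" using in_closed_iff_infdist_zero[OF C False] infdist_nonneg[of x C] by simp
      obtain N :: nat where N: "real N > 1 / infdist x C" using reals_Archimedean2 by blast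
      have "eventually (\<lambda>n. s n x = indicator C x) sequentially"
        unfolding eventually_sequentially
      proof (intro exI[of _ N] allI impI)
        fix n assume "N \<le> n"
        then have "real n > 1 / infdist x C" using N by (meson le_less_trans of_nat_le_iff less_le_trans not_le)
        then have "real n * infdist x C > 1" using d by (simp add: field_simps)
        then show "s n x = indicator C x" using nC by (simp add: s_def)
      qed
      then show ?thesis by (rule tendsto_eventually)
    qed
    have ms: "s n \<in> borel_measurable borel" for n by (rule borel_measurable_continuous_onI[OF sc])
    have mC: "indicator C \<in> borel_measurable (borel::'a measure)" using C by (intro borel_measurable_indicator) (simp add: borel_closed)
    have msP: "s n \<in> borel_measurable P" for n using ms unfolding measurable_cong_sets[OF sP refl] .
    have msQ: "s n \<in> borel_measurable Q" for n using ms unfolding measurable_cong_sets[OF sQ refl] .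
    have mCP: "indicator C \<in> borel_measurable P" using mC unfolding measurable_cong_sets[OF sP refl] .
    have mCQ: "indicator C \<in> borel_measurable Q" using mC unfolding measurable_cong_sets[OF sQ refl] .
    have limP: "(\<lambda>n. \<integral>x. s n x \<partial>P) \<longlonglongrightarrow> (\<integral>x. indicator C x \<partial>P)"
      by (rule integral_dominated_convergence[where w="\<lambda>_. 1", OF mCP msP finite_measure.integrable_const[OF fP]])
         (use sb lim in auto)
    have limQ: "(\<lambda>n. \<integral>x. s n x \<partial>Q) \<longlonglongrightarrow> (\<integral>x. indicator C x \<partial>Q)"
      by (rule integral_dominated_convergence[where w="\<lambda>_. 1", OF mCQ msQ finite_measure.integrable_const[OF fQ]])
         (use sb lim in auto)
    have eqs: "(\<lambda>n. \<integral>x. s n x \<partial>P) = (\<lambda>n. \<integral>x. s n x \<partial>Q)" using beq[OF sc sb] by simp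
    have "(\<lambda>n. \<integral>x. s n x \<partial>Q) \<longlonglongrightarrow> (\<integral>x. indicator C x \<partial>P)" using limP unfolding eqs .
    from LIMSEQ_unique[OF this limQ] have "(\<integral>x. (indicator C x::real) \<partial>P) = (\<integral>x. indicator C x \<partial>Q)" .
    then have "measure P C = measure Q C" using spP spQ by simp
    then show ?thesis
      using finite_measure.emeasure_eq_measure[OF fP] finite_measure.emeasure_eq_measure[OF fQ] by simp
  qed
  show ?thesis
  proof (rule measure_eqI_generator_eq[where E="Collect closed" and \<Omega>=UNIV and A="\<lambda>_. UNIV"])
    show "Int_stable (Collect closed)" by (auto simp: Int_stable_def)
    show "sets P = sigma_sets UNIV (Collect closed)" using sP by (simp add: borel_eq_closed)
    show "sets Q = sigma_sets UNIV (Collect closed)" using sQ by (simp add: borel_eq_closed)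
    show "emeasure P UNIV \<noteq> \<infinity>" for i using finite_measure.emeasure_finite[OF fP, of UNIV] spP by simp
  qed (auto intro: closed_eq)
qed


definition Nmeas :: "(real^'n^'n::finite) measure \<Rightarrow> real \<Rightarrow> 'n proj measure \<Rightarrow> real \<Rightarrow> 'n proj measure" where
  "Nmeas \<mu> s \<nu> \<kappa> = distr (density (\<nu> \<Otimes>\<^sub>M \<mu>) (\<lambda>(x,g). ennreal (exp (s * cocycle g x) / \<kappa>))) proj_borel (\<lambda>(x,g). act g x)"

lemma proj_continuous_q:
  assumes "continuous_on UNIV f"
  shows "proj_continuous (\<lambda>x. f (q x))"
proof -
  have "continuous_on (UNIV - {0}) (\<lambda>v. f (qv v))"
    unfolding qv_def
    by (intro continuous_on_compose2[OF assms] continuous_on_vec_lambda continuous_intros) auto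
  moreover have "\<And>v. v \<in> UNIV - {0} \<Longrightarrow> f (q (line v)) = f (qv v)" by (simp add: q_line)
  ultimately show ?thesis unfolding proj_continuous_def using continuous_on_cong by metis
qed

locale setting =
  fixes \<mu> :: "(real^'n^'n::finite) measure" and s :: real and \<nu> :: "'n proj measure" and \<kappa> :: real and C :: real
  assumes mu_prob: "prob_space \<mu>" and mu_sets: "sets \<mu> = sets borel"
    and mu_inv: "AE g in \<mu>. invertible g"
    and eig: "eigen \<mu> s \<nu> \<kappa>"
    and wint: "\<And>x. integrable \<mu> (\<lambda>g. exp (s * cocycle g x))"
    and wbd: "\<And>x. (\<integral>g. exp (s * cocycle g x) \<partial>\<mu>) \<le> C"
begin

lemma nu_prob: "prob_space \<nu>" and nu_sets: "sets \<nu> = sets proj_borel" and kappa_pos: "\<kappa> > 0"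
  and eig_eq: "\<And>\<phi>. proj_continuous \<phi> \<Longrightarrow> (\<integral>x. Ps \<mu> s \<phi> x \<partial>\<nu>) = \<kappa> * (\<integral>x. \<phi> x \<partial>\<nu>)"
  using eig unfolding eigen_def by auto

sublocale MU: prob_space \<mu> by (rule mu_prob)
sublocale NU: prob_space \<nu> by (rule nu_prob)
sublocale PP: pair_prob_space \<nu> \<mu> ..

lemma space_nu[simp]: "space \<nu> = UNIV"
  using sets_eq_imp_space_eq[OF nu_sets] by simp
lemma space_mu[simp]: "space \<mu> = UNIV"
  using sets_eq_imp_space_eq[OF mu_sets] by simp

lemma pair_sets: "sets (\<nu> \<Otimes>\<^sub>M \<mu>) = sets (proj_borel \<Otimes>\<^sub>M borel)"
  by (rule sets_pair_measure_cong[OF nu_sets mu_sets])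

lemmas nu_cong = measurable_cong_sets[OF nu_sets refl]
lemmas mu_cong = measurable_cong_sets[OF mu_sets refl]
lemmas pair_cong = measurable_cong_sets[OF pair_sets refl]

definition W :: "'n proj \<times> (real^'n^'n) \<Rightarrow> real" where
  "W z = exp (s * cocycle (snd z) (fst z)) / \<kappa>"

lemma W_pos: "W z > 0" unfolding W_def using kappa_pos by simp

lemma W_meas[measurable]: "W \<in> borel_measurable (\<nu> \<Otimes>\<^sub>M \<mu>)"
  unfolding pair_cong W_def by measurable

lemma act_pair_meas[measurable]: "(\<lambda>(x, g). act g x) \<in> measurable (\<nu> \<Otimes>\<^sub>M \<mu>) proj_borel"
  unfolding pair_cong by measurable

lemma N_def': "Nmeas \<mu> s \<nu> \<kappa> = distr (density (\<nu> \<Otimes>\<^sub>M \<mu>) (\<lambda>z. ennreal (W z))) proj_borel (\<lambda>(x,g). act g x)"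
  unfolding Nmeas_def W_def by (simp add: case_prod_beta')

lemma N_sets: "sets (Nmeas \<mu> s \<nu> \<kappa>) = sets proj_borel"
  unfolding N_def' by simp

lemma N_nn:
  assumes F[measurable]: "F \<in> borel_measurable proj_borel"
  shows "(\<integral>\<^sup>+y. F y \<partial>Nmeas \<mu> s \<nu> \<kappa>) = (\<integral>\<^sup>+x. \<integral>\<^sup>+g. ennreal (W (x,g)) * F (act g x) \<partial>\<mu> \<partial>\<nu>)"
proof -
  have "(\<integral>\<^sup>+y. F y \<partial>Nmeas \<mu> s \<nu> \<kappa>) = (\<integral>\<^sup>+z. F (case z of (x, g) \<Rightarrow> act g x) \<partial>density (\<nu> \<Otimes>\<^sub>M \<mu>) (\<lambda>z. ennreal (W z)))"
    unfolding N_def' by (rule nn_integral_distr) (simp_all add: act_pair_meas)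
  also have "\<dots> = (\<integral>\<^sup>+z. ennreal (W z) * F (case z of (x, g) \<Rightarrow> act g x) \<partial>(\<nu> \<Otimes>\<^sub>M \<mu>))"
    by (rule nn_integral_density) measurable
  also have "\<dots> = (\<integral>\<^sup>+x. \<integral>\<^sup>+g. ennreal (W (x,g)) * F (act g x) \<partial>\<mu> \<partial>\<nu>)"
  proof -
    have m: "(\<lambda>z. ennreal (W z) * F (case z of (x, g) \<Rightarrow> act g x)) \<in> borel_measurable (\<nu> \<Otimes>\<^sub>M \<mu>)"
      by measurable
    show ?thesis using MU.nn_integral_fst[OF m] by simp
  qed
  finally show ?thesis .
qed

lemma Ps_meas:
  assumes [measurable]: "\<phi> \<in> borel_measurable proj_borel"
  shows "Ps \<mu> s \<phi> \<in> borel_measurable proj_borel"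
proof -
  have "(\<lambda>(x, g). exp (s * cocycle g x) * \<phi> (act g x)) \<in> borel_measurable (proj_borel \<Otimes>\<^sub>M \<mu>)"
    unfolding measurable_cong_sets[OF sets_pair_measure_cong[OF refl mu_sets] refl] by measurable
  then have "(\<lambda>x. \<integral>g. exp (s * cocycle g x) * \<phi> (act g x) \<partial>\<mu>) \<in> borel_measurable proj_borel"
    by (rule MU.borel_measurable_lebesgue_integral[of "\<lambda>x g. exp (s * cocycle g x) * \<phi> (act g x)", simplified])
  then show ?thesis unfolding Ps_def[abs_def] .
qed

lemma w_phi_int:
  assumes [measurable]: "\<phi> \<in> borel_measurable proj_borel" and b: "\<And>x. \<bar>\<phi> x\<bar> \<le> 1"
  shows "integrable \<mu> (\<lambda>g. exp (s * cocycle g x) * \<phi> (act g x))"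
proof (rule Bochner_Integration.integrable_bound[OF wint[of x]])
  show "(\<lambda>g. exp (s * cocycle g x) * \<phi> (act g x)) \<in> borel_measurable \<mu>"
    unfolding mu_cong by measurable
  show "AE g in \<mu>. norm (exp (s * cocycle g x) * \<phi> (act g x)) \<le> norm (exp (s * cocycle g x))"
    using b by (auto simp: abs_mult intro!: mult_left_le)
qed

lemma Ps_bound:
  assumes [measurable]: "\<phi> \<in> borel_measurable proj_borel" and b: "\<And>x. 0 \<le> \<phi> x \<and> \<phi> x \<le> 1"
  shows "0 \<le> Ps \<mu> s \<phi> x \<and> Ps \<mu> s \<phi> x \<le> C"
proof
  show "0 \<le> Ps \<mu> s \<phi> x" unfolding Ps_def using b by (intro Bochner_Integration.integral_nonneg) auto
  have "Ps \<mu> s \<phi> x \<le> (\<integral>g. exp (s * cocycle g x) \<partial>\<mu>)"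
    unfolding Ps_def
    by (rule integral_mono[OF w_phi_int wint]) (use b in \<open>auto intro!: mult_left_le simp: abs_le_iff\<close>)
  also have "\<dots> \<le> C" by (rule wbd)
  finally show "Ps \<mu> s \<phi> x \<le> C" .
qed

lemma cont_eq:
  assumes c: "continuous_on UNIV f" and b: "\<And>M. 0 \<le> f M \<and> f M \<le> 1"
  shows "(\<integral>\<^sup>+x. ennreal (f (q x)) \<partial>Nmeas \<mu> s \<nu> \<kappa>) = (\<integral>\<^sup>+x. ennreal (f (q x)) \<partial>\<nu>)"
proof -
  define \<phi> where "\<phi> = (\<lambda>x. f (q x))"
  have mf[measurable]: "f \<in> borel_measurable borel" using c by (rule borel_measurable_continuous_onI)
  have m\<phi>[measurable]: "\<phi> \<in> borel_measurable proj_borel" unfolding \<phi>_def by measurable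
  have b\<phi>: "\<And>x. 0 \<le> \<phi> x \<and> \<phi> x \<le> 1" unfolding \<phi>_def using b by auto
  have b\<phi>': "\<And>x. \<bar>\<phi> x\<bar> \<le> 1" using b\<phi> by (simp add: abs_le_iff)
  have inner: "(\<integral>\<^sup>+g. ennreal (W (x,g)) * ennreal (\<phi> (act g x)) \<partial>\<mu>) = ennreal (Ps \<mu> s \<phi> x / \<kappa>)" for x
  proof -
    have "(\<integral>\<^sup>+g. ennreal (W (x,g)) * ennreal (\<phi> (act g x)) \<partial>\<mu>)
        = (\<integral>\<^sup>+g. ennreal (exp (s * cocycle g x) * \<phi> (act g x) / \<kappa>) \<partial>\<mu>)"
    proof (intro nn_integral_cong)
      fix g
      have "ennreal (W (x,g)) * ennreal (\<phi> (act g x)) = ennreal (W (x,g) * \<phi> (act g x))"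
        using W_pos[of "(x,g)"] by (simp add: ennreal_mult')
      also have "W (x,g) * \<phi> (act g x) = exp (s * cocycle g x) * \<phi> (act g x) / \<kappa>" by (simp add: W_def)
      finally show "ennreal (W (x,g)) * ennreal (\<phi> (act g x)) = ennreal (exp (s * cocycle g x) * \<phi> (act g x) / \<kappa>)" .
    qed
    also have "\<dots> = ennreal (\<integral>g. exp (s * cocycle g x) * \<phi> (act g x) / \<kappa> \<partial>\<mu>)"
      by (rule nn_integral_eq_integral)
         (use w_phi_int[OF m\<phi> b\<phi>'] b\<phi> kappa_pos in auto)
    also have "\<dots> = ennreal (Ps \<mu> s \<phi> x / \<kappa>)" by (simp add: Ps_def)
    finally show ?thesis .
  qed
  have "(\<integral>\<^sup>+x. ennreal (\<phi> x) \<partial>Nmeas \<mu> s \<nu> \<kappa>) = (\<integral>\<^sup>+x. \<integral>\<^sup>+g. ennreal (W (x,g)) * ennreal (\<phi> (act g x)) \<partial>\<mu> \<partial>\<nu>)"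
    by (rule N_nn) measurable
  also have "\<dots> = (\<integral>\<^sup>+x. ennreal (Ps \<mu> s \<phi> x / \<kappa>) \<partial>\<nu>)" by (simp add: inner)
  also have "\<dots> = ennreal (\<integral>x. Ps \<mu> s \<phi> x / \<kappa> \<partial>\<nu>)"
  proof (rule nn_integral_eq_integral)
    have mP: "(\<lambda>x. Ps \<mu> s \<phi> x / \<kappa>) \<in> borel_measurable \<nu>"
      unfolding nu_cong using Ps_meas[OF m\<phi>] by measurable
    show "integrable \<nu> (\<lambda>x. Ps \<mu> s \<phi> x / \<kappa>)"
      by (rule NU.integrable_const_bound[where B="C / \<kappa>", OF _ mP])
         (use Ps_bound[OF m\<phi> b\<phi>] kappa_pos in \<open>auto simp: divide_right_mono\<close>)
    show "AE x in \<nu>. 0 \<le> Ps \<mu> s \<phi> x / \<kappa>" using Ps_bound[OF m\<phi> b\<phi>] kappa_pos by simp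
  qed
  also have "\<dots> = ennreal (\<integral>x. \<phi> x \<partial>\<nu>)"
    using eig_eq[OF proj_continuous_q[OF c]] kappa_pos by (simp add: \<phi>_def)
  also have "\<dots> = (\<integral>\<^sup>+x. ennreal (\<phi> x) \<partial>\<nu>)"
  proof (rule nn_integral_eq_integral[symmetric])
    show "integrable \<nu> \<phi>"
      by (rule NU.integrable_const_bound[where B=1]) (use b\<phi>' in \<open>auto simp: nu_cong\<close>)
  qed (use b\<phi> in auto)
  finally show ?thesis unfolding \<phi>_def .
qed

lemma nu_eq_N: "\<nu> = Nmeas \<mu> s \<nu> \<kappa>"
proof -
  define N where "N = Nmeas \<mu> s \<nu> \<kappa>"
  have Ns: "sets N = sets proj_borel" unfolding N_def by (rule N_sets)
  have spN: "space N = UNIV" using sets_eq_imp_space_eq[OF Ns] by simp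
  have qnu: "q \<in> measurable \<nu> borel" unfolding nu_cong by measurable
  have qN: "q \<in> measurable N borel" unfolding measurable_cong_sets[OF Ns refl] by measurable
  have one: "(\<integral>\<^sup>+x. ennreal 1 \<partial>N) = (\<integral>\<^sup>+x. ennreal 1 \<partial>\<nu>)"
    using cont_eq[of "\<lambda>_. 1"] unfolding N_def by simp
  have eN: "emeasure N (space N) = 1"
    using one NU.emeasure_space_1 by (simp add: nn_integral_const)
  have finN: "finite_measure N" by (rule finite_measureI) (simp add: eN)
  have PQ: "distr \<nu> borel q = distr N borel q"
  proof (rule finite_measure_eq_cont)
    show "finite_measure (distr \<nu> borel q)" by (rule NU.finite_measure_distr[OF qnu])
    show "finite_measure (distr N borel q)" by (rule finite_measure.finite_measure_distr[OF finN qN])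
    fix f :: "real^'n^'n \<Rightarrow> real" assume c: "continuous_on UNIV f" and b: "\<And>x. 0 \<le> f x \<and> f x \<le> 1"
    have mf[measurable]: "f \<in> borel_measurable borel" using c by (rule borel_measurable_continuous_onI)
    have "(\<integral>\<^sup>+x. ennreal (f x) \<partial>distr \<nu> borel q) = (\<integral>\<^sup>+x. ennreal (f (q x)) \<partial>\<nu>)"
      by (rule nn_integral_distr[OF qnu]) simp
    also have "\<dots> = (\<integral>\<^sup>+x. ennreal (f (q x)) \<partial>N)" unfolding N_def using cont_eq[OF c b] by simp
    also have "\<dots> = (\<integral>\<^sup>+x. ennreal (f x) \<partial>distr N borel q)"
      by (rule nn_integral_distr[OF qN, symmetric]) simp
    finally show "(\<integral>\<^sup>+x. ennreal (f x) \<partial>distr \<nu> borel q) = (\<integral>\<^sup>+x. ennreal (f x) \<partial>distr N borel q)" .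
  qed simp_all
  have ls: "(\<lambda>M. line (sig M)) \<in> measurable borel proj_borel" by measurable
  have comp: "(\<lambda>M. line (sig M)) \<circ> q = (\<lambda>x. x)" by (auto simp: sec_def[symmetric])
  have "\<nu> = distr \<nu> proj_borel (\<lambda>x. x)" by (rule distr_id2[OF nu_sets[symmetric], symmetric])
  also have "\<dots> = distr (distr \<nu> borel q) proj_borel (\<lambda>M. line (sig M))"
    by (subst distr_distr[OF ls qnu]) (simp add: comp)
  also have "\<dots> = distr (distr N borel q) proj_borel (\<lambda>M. line (sig M))" by (simp add: PQ)
  also have "\<dots> = distr N proj_borel (\<lambda>x. x)"
    by (subst distr_distr[OF ls qN]) (simp add: comp)
  also have "\<dots> = N" by (rule distr_id2[OF Ns[symmetric]])
  finally show ?thesis unfolding N_def .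
qed

end


context setting begin

lemma E2:
  assumes F: "integrable \<nu> F"
  shows "integrable (\<nu> \<Otimes>\<^sub>M \<mu>) (\<lambda>(x,g). W (x,g) * F (act g x))"
    and "(\<integral>x. F x \<partial>\<nu>) = (\<integral>z. (case z of (x,g) \<Rightarrow> W (x,g) * F (act g x)) \<partial>(\<nu> \<Otimes>\<^sub>M \<mu>))"
proof -
  have mF[measurable]: "F \<in> borel_measurable proj_borel" using borel_measurable_integrable[OF F] unfolding nu_cong .
  have T: "(\<lambda>(x, g). act g x) \<in> measurable (density (\<nu> \<Otimes>\<^sub>M \<mu>) (\<lambda>z. ennreal (W z))) proj_borel" by simp
  have FT: "(\<lambda>z. F (case z of (x, g) \<Rightarrow> act g x)) \<in> borel_measurable (\<nu> \<Otimes>\<^sub>M \<mu>)" by measurable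
  have eqf: "(\<lambda>z. W z *\<^sub>R F (case z of (x, g) \<Rightarrow> act g x)) = (\<lambda>(x,g). W (x,g) * F (act g x))"
    by (auto simp: fun_eq_iff)
  have "integrable (Nmeas \<mu> s \<nu> \<kappa>) F" using F nu_eq_N by simp
  then have "integrable (density (\<nu> \<Otimes>\<^sub>M \<mu>) (\<lambda>z. ennreal (W z))) (\<lambda>z. F (case z of (x, g) \<Rightarrow> act g x))"
    unfolding N_def' using integrable_distr_eq[OF T mF] by simp
  then show "integrable (\<nu> \<Otimes>\<^sub>M \<mu>) (\<lambda>(x,g). W (x,g) * F (act g x))"
    using integrable_density[OF FT W_meas] W_pos eqf by (simp add: less_imp_le)
  have "(\<integral>x. F x \<partial>\<nu>) = (\<integral>x. F x \<partial>Nmeas \<mu> s \<nu> \<kappa>)" using nu_eq_N by simp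
  also have "\<dots> = (\<integral>z. F (case z of (x, g) \<Rightarrow> act g x) \<partial>density (\<nu> \<Otimes>\<^sub>M \<mu>) (\<lambda>z. ennreal (W z)))"
    unfolding N_def' by (rule integral_distr[OF T mF])
  also have "\<dots> = (\<integral>z. W z *\<^sub>R F (case z of (x, g) \<Rightarrow> act g x) \<partial>(\<nu> \<Otimes>\<^sub>M \<mu>))"
    by (rule integral_density[OF FT W_meas]) (simp add: W_pos less_imp_le)
  also have "\<dots> = (\<integral>z. (case z of (x,g) \<Rightarrow> W (x,g) * F (act g x)) \<partial>(\<nu> \<Otimes>\<^sub>M \<mu>))"
    unfolding eqf ..
  finally show "(\<integral>x. F x \<partial>\<nu>) = (\<integral>z. (case z of (x,g) \<Rightarrow> W (x,g) * F (act g x)) \<partial>(\<nu> \<Otimes>\<^sub>M \<mu>))" .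
qed

lemma rstar_meas[measurable]: "(\<lambda>y. rstar s \<nu> y) \<in> borel_measurable proj_borel"
proof -
  have "(\<lambda>(y, x). rpow (delta x y) s) \<in> borel_measurable (proj_borel \<Otimes>\<^sub>M \<nu>)"
    unfolding measurable_cong_sets[OF sets_pair_measure_cong[OF refl nu_sets] refl] by measurable
  then show ?thesis unfolding rstar_def
    by (rule NU.borel_measurable_lebesgue_integral[of "\<lambda>y x. rpow (delta x y) s", simplified])
qed

lemma rstar_meas'[measurable (raw)]:
  "h \<in> measurable M proj_borel \<Longrightarrow> (\<lambda>x. rstar s \<nu> (h x)) \<in> borel_measurable M"
  by (rule measurable_compose[OF _ rstar_meas])

lemma rpow_nonneg: "t \<ge> 0 \<Longrightarrow> rpow t s \<ge> 0"
  by (simp add: rpow_def)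

lemma delta_nonneg: "delta x y \<ge> 0"
  by (simp add: delta_def)

lemma d_nonneg: "rpow (delta x y) s \<ge> 0"
  by (rule rpow_nonneg[OF delta_nonneg])

lemma main:
  assumes mphi[measurable]: "\<phi> \<in> borel_measurable proj_borel" and bphi: "bounded (range \<phi>)"
  shows "upsilon s \<nu> y \<phi> = (\<integral>g. g_upsilon g s \<nu> (act (transpose g) y) \<phi> * qstar s \<kappa> \<nu> g y \<partial>\<mu>)"
proof -
  obtain B where B: "\<And>x. \<bar>\<phi> x\<bar> \<le> B" using bphi unfolding bounded_iff by auto
  define r where "r = rstar s \<nu> y"
  have RHS_meas: "(\<lambda>g. g_upsilon g s \<nu> (act (transpose g) y) \<phi> * qstar s \<kappa> \<nu> g y) \<in> borel_measurable \<mu>"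
  proof -
    have "(\<lambda>(g, x). \<phi> (act g x) * rpow (delta x (act (transpose g) y)) s / rstar s \<nu> (act (transpose g) y))
        \<in> borel_measurable (\<mu> \<Otimes>\<^sub>M \<nu>)"
      unfolding measurable_cong_sets[OF sets_pair_measure_cong[OF mu_sets nu_sets] refl] by measurable
    then have "(\<lambda>g. \<integral>x. \<phi> (act g x) * rpow (delta x (act (transpose g) y)) s / rstar s \<nu> (act (transpose g) y) \<partial>\<nu>) \<in> borel_measurable \<mu>"
      by (rule NU.borel_measurable_lebesgue_integral)
    moreover have "(\<lambda>g. qstar s \<kappa> \<nu> g y) \<in> borel_measurable \<mu>"
      unfolding qstar_def mu_cong by measurable
    ultimately show ?thesis unfolding g_upsilon_def upsilon_def by measurable
  qed
  show ?thesis
  proof (cases "r = 0")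
    case True
    then show ?thesis by (simp add: upsilon_def qstar_def r_def)
  next
    case False
    have int_d: "integrable \<nu> (\<lambda>x. rpow (delta x y) s)"
      using False not_integrable_integral_eq unfolding r_def rstar_def by blast
    have int_F: "integrable \<nu> (\<lambda>x. \<phi> x * rpow (delta x y) s)"
    proof (rule Bochner_Integration.integrable_bound[of _ "\<lambda>x. B * rpow (delta x y) s"])
      show "integrable \<nu> (\<lambda>x. B * rpow (delta x y) s)" using int_d by simp
      show "(\<lambda>x. \<phi> x * rpow (delta x y) s) \<in> borel_measurable \<nu>" unfolding nu_cong by measurable
      show "AE x in \<nu>. norm (\<phi> x * rpow (delta x y) s) \<le> norm (B * rpow (delta x y) s)"
        using B d_nonneg by (auto simp: abs_mult intro!: mult_right_mono order_trans[OF _ abs_ge_self])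
    qed
    define H where "H = (\<lambda>x g. W (x,g) * (\<phi> (act g x) * rpow (delta (act g x) y) s))"
    define H0 where "H0 = (\<lambda>x g. W (x,g) * rpow (delta (act g x) y) s)"
    have intH: "integrable (\<nu> \<Otimes>\<^sub>M \<mu>) (case_prod H)" using E2(1)[OF int_F] unfolding H_def .
    have eqF: "(\<integral>x. \<phi> x * rpow (delta x y) s \<partial>\<nu>) = integral\<^sup>L (\<nu> \<Otimes>\<^sub>M \<mu>) (case_prod H)"
      using E2(2)[OF int_F] unfolding H_def by (simp add: case_prod_beta')
    have intH0: "integrable (\<nu> \<Otimes>\<^sub>M \<mu>) (case_prod H0)" using E2(1)[OF int_d] unfolding H0_def .
    have fub: "(\<integral>g. (\<integral>x. H x g \<partial>\<nu>) \<partial>\<mu>) = integral\<^sup>L (\<nu> \<Otimes>\<^sub>M \<mu>) (case_prod H)"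
      by (rule PP.integral_snd[OF intH])
    have ae0: "AE g in \<mu>. integrable \<nu> (\<lambda>x. H0 x g)" by (rule PP.AE_integrable_snd[OF intH0])
    have inner_meas: "(\<lambda>g. (\<integral>x. H x g \<partial>\<nu>) / r) \<in> borel_measurable \<mu>"
    proof -
      have "(\<lambda>(g, x). H x g) \<in> borel_measurable (\<mu> \<Otimes>\<^sub>M \<nu>)"
        unfolding H_def W_def measurable_cong_sets[OF sets_pair_measure_cong[OF mu_sets nu_sets] refl] by measurable
      then have "(\<lambda>g. \<integral>x. H x g \<partial>\<nu>) \<in> borel_measurable \<mu>"
        by (rule NU.borel_measurable_lebesgue_integral)
      then show ?thesis by measurable
    qed
    have pw: "g_upsilon g s \<nu> (act (transpose g) y) \<phi> * qstar s \<kappa> \<nu> g y = (\<integral>x. H x g \<partial>\<nu>) / r"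
      if g: "invertible g" and i0: "integrable \<nu> (\<lambda>x. H0 x g)" for g
    proof -
      define y' where "y' = act (transpose g) y"
      define c where "c = exp (s * cocycle (transpose g) y) / \<kappa>"
      have cpos: "c > 0" unfolding c_def using kappa_pos by simp
      have key: "W (x,g) * rpow (delta (act g x) y) s = c * rpow (delta x y') s" for x
        using key_identity[OF g, of x y s] unfolding W_def c_def y'_def by (simp add: field_simps)
      have "integrable \<nu> (\<lambda>x. c * rpow (delta x y') s)"
        using i0 unfolding H0_def key .
      then have int_d': "integrable \<nu> (\<lambda>x. rpow (delta x y') s)" using cpos by simp
      have Hx: "H x g = c * (\<phi> (act g x) * rpow (delta x y') s)" for x
        unfolding H_def using key[of x] by (simp add: ac_simps)
      define I where "I = (\<integral>x. \<phi> (act g x) * rpow (delta x y') s \<partial>\<nu>)"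
      have intH: "(\<integral>x. H x g \<partial>\<nu>) = c * I" unfolding Hx I_def by simp
      have lhs: "g_upsilon g s \<nu> (act (transpose g) y) \<phi> * qstar s \<kappa> \<nu> g y
          = (I / rstar s \<nu> y') * (c * (rstar s \<nu> y' / r))"
        unfolding g_upsilon_def upsilon_def qstar_def I_def y'_def[symmetric] c_def[symmetric] r_def by simp
      show ?thesis
      proof (cases "rstar s \<nu> y' = 0")
        case True
        have "AE x in \<nu>. rpow (delta x y') s = 0"
          using True int_d' d_nonneg unfolding rstar_def
          by (subst integral_nonneg_eq_0_iff_AE[symmetric]) auto
        then have "AE x in \<nu>. \<phi> (act g x) * rpow (delta x y') s = 0" by eventually_elim simp
        then have "I = 0" unfolding I_def by (subst integral_cong_AE[where g="\<lambda>_. 0"]) (auto simp: nu_cong)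
        then show ?thesis unfolding lhs intH using True by simp
      next
        case False
        then show ?thesis unfolding lhs intH by (simp add: field_simps)
      qed
    qed
    have "(\<integral>g. g_upsilon g s \<nu> (act (transpose g) y) \<phi> * qstar s \<kappa> \<nu> g y \<partial>\<mu>) = (\<integral>g. (\<integral>x. H x g \<partial>\<nu>) / r \<partial>\<mu>)"
    proof (rule integral_cong_AE[OF RHS_meas inner_meas])
      show "AE g in \<mu>. g_upsilon g s \<nu> (act (transpose g) y) \<phi> * qstar s \<kappa> \<nu> g y = (\<integral>x. H x g \<partial>\<nu>) / r"
        using mu_inv ae0 by eventually_elim (rule pw)
    qed
    also have "\<dots> = (\<integral>x. \<phi> x * rpow (delta x y) s \<partial>\<nu>) / r" by (simp add: fub eqF)
    also have "\<dots> = upsilon s \<nu> y \<phi>" unfolding upsilon_def r_def by simp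
    finally show ?thesis by simp
  qed
qed

end


lemma matrix_inv_left': "invertible g \<Longrightarrow> matrix_inv g ** g = mat 1"
  unfolding invertible_def matrix_inv_def by (rule someI2_ex) auto

lemma norm_le_inv:
  fixes g :: "real^'n::finite^'n"
  assumes g: "invertible g"
  shows "norm v \<le> opnorm (matrix_inv g) * norm (g *v v)"
proof -
  have "v = matrix_inv g *v (g *v v)"
    by (simp add: matrix_vector_mul_assoc matrix_inv_left'[OF g])
  then have "norm v = norm (matrix_inv g *v (g *v v))" by simp
  also have "\<dots> \<le> opnorm (matrix_inv g) * norm (g *v v)"
    unfolding opnorm_def by (rule onorm) simp
  finally show ?thesis .
qed

lemma norm_le_op:
  fixes g :: "real^'n::finite^'n"
  shows "norm (g *v v) \<le> opnorm g * norm v"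
  unfolding opnorm_def by (rule onorm) simp

lemma w_eq:
  fixes g :: "real^'n::finite^'n"
  assumes g: "invertible g"
  shows "exp (s * cocycle g x) = (norm (g *v sec x) / norm (sec x)) powr s"
    and "norm (g *v sec x) / norm (sec x) > 0"
proof -
  have "g *v sec x \<noteq> 0" by (rule inv_nz[OF g]) simp
  then show pos: "norm (g *v sec x) / norm (sec x) > 0" by simp
  show "exp (s * cocycle g x) = (norm (g *v sec x) / norm (sec x)) powr s"
    unfolding cocycle_sec by (rule exp_ln_powr[OF pos])
qed

lemma w_integrable_from_nn:
  fixes \<mu> :: "(real^'n::finite^'n) measure"
  assumes ms: "sets \<mu> = sets borel"
    and K: "\<And>x. (\<integral>\<^sup>+g. ennreal (exp (s * cocycle g x)) \<partial>\<mu>) \<le> K" and Kfin: "K < top"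
  shows "integrable \<mu> (\<lambda>g. exp (s * cocycle g x))" and "(\<integral>g. exp (s * cocycle g x) \<partial>\<mu>) \<le> enn2real K"
proof -
  have m: "(\<lambda>g. exp (s * cocycle g x)) \<in> borel_measurable \<mu>"
    unfolding measurable_cong_sets[OF ms refl] by measurable
  show "integrable \<mu> (\<lambda>g. exp (s * cocycle g x))"
    by (rule integrableI_bounded[OF m]) (use K[of x] Kfin in auto)
  have "(\<integral>g. exp (s * cocycle g x) \<partial>\<mu>) = enn2real (\<integral>\<^sup>+g. ennreal (exp (s * cocycle g x)) \<partial>\<mu>)"
    by (rule integral_eq_nn_integral[OF m]) simp
  also have "\<dots> \<le> enn2real K" by (rule enn2real_mono[OF K[of x] Kfin])
  finally show "(\<integral>g. exp (s * cocycle g x) \<partial>\<mu>) \<le> enn2real K" .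
qed

lemma nn_bound_pos:
  fixes \<mu> :: "(real^'n::finite^'n) measure"
  assumes inv: "AE g in \<mu>. invertible g" and s: "s > 0"
  shows "(\<integral>\<^sup>+g. ennreal (exp (s * cocycle g x)) \<partial>\<mu>) \<le> (\<integral>\<^sup>+g. ennreal (opnorm g powr s) \<partial>\<mu>)"
proof (rule nn_integral_mono_AE)
  show "AE g in \<mu>. ennreal (exp (s * cocycle g x)) \<le> ennreal (opnorm g powr s)"
    using inv
  proof eventually_elim
    case (elim g)
    have "norm (g *v sec x) / norm (sec x) \<le> opnorm g"
      using norm_le_op[of g "sec x"] by (simp add: divide_le_eq)
    then have "(norm (g *v sec x) / norm (sec x)) powr s \<le> opnorm g powr s"
      using s by (intro powr_mono2) auto
    then show ?case unfolding w_eq(1)[OF elim] by (rule ennreal_leI)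
  qed
qed

lemma nn_bound_neg:
  fixes \<mu> :: "(real^'n::finite^'n) measure"
  assumes ms: "sets \<mu> = sets borel" and pr: "prob_space \<mu>"
    and inv: "AE g in \<mu>. invertible g" and s: "s < 0" and al: "- s \<le> \<alpha>"
  shows "(\<integral>\<^sup>+g. ennreal (exp (s * cocycle g x)) \<partial>\<mu>) \<le> 1 + (\<integral>\<^sup>+g. ennreal (Nmat g powr \<alpha>) \<partial>\<mu>)"
proof -
  define w where "w = (\<lambda>g. exp (s * cocycle g x))"
  have mw[measurable]: "w \<in> borel_measurable \<mu>"
    unfolding w_def measurable_cong_sets[OF ms refl] by measurable
  have split: "ennreal (w g) = ennreal (min (w g) 1) + ennreal (w g - min (w g) 1)" for g
    by (subst ennreal_plus[symmetric]) (auto simp: w_def)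
  have "(\<integral>\<^sup>+g. ennreal (w g) \<partial>\<mu>) = (\<integral>\<^sup>+g. ennreal (min (w g) 1) + ennreal (w g - min (w g) 1) \<partial>\<mu>)"
    by (simp only: split[symmetric])
  also have "\<dots> = (\<integral>\<^sup>+g. ennreal (min (w g) 1) \<partial>\<mu>) + (\<integral>\<^sup>+g. ennreal (w g - min (w g) 1) \<partial>\<mu>)"
    by (rule nn_integral_add) measurable
  also have "(\<integral>\<^sup>+g. ennreal (min (w g) 1) \<partial>\<mu>) \<le> (\<integral>\<^sup>+g. 1 \<partial>\<mu>)"
    by (intro nn_integral_mono) auto
  also have "(\<integral>\<^sup>+g. 1 \<partial>\<mu>) = 1" using prob_space.emeasure_space_1[OF pr] by simp
  also have "(\<integral>\<^sup>+g. ennreal (w g - min (w g) 1) \<partial>\<mu>) \<le> (\<integral>\<^sup>+g. ennreal (Nmat g powr \<alpha>) \<partial>\<mu>)"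
  proof (rule nn_integral_mono_AE)
    show "AE g in \<mu>. ennreal (w g - min (w g) 1) \<le> ennreal (Nmat g powr \<alpha>)"
      using inv
    proof eventually_elim
      case (elim g)
      define t where "t = norm (g *v sec x) / norm (sec x)"
      have t: "t > 0" unfolding t_def by (rule w_eq(2)[OF elim])
      have wt: "w g = t powr s" unfolding w_def t_def by (rule w_eq(1)[OF elim])
      show ?case
      proof (cases "w g \<le> 1")
        case True then show ?thesis by (intro ennreal_leI) simp
      next
        case False
        then have w1: "w g > 1" by simp
        have t1: "t < 1"
        proof (rule ccontr)
          assume "\<not> t < 1"
          then have "t \<ge> 1" by simp
          then have "t powr s \<le> t powr 0" using s by (intro powr_mono) auto
          then show False using w1 wt t by simp
        qed
        have it: "1 / t \<le> Nmat g"
        proof -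
          have "norm (sec x) \<le> opnorm (matrix_inv g) * norm (g *v sec x)" by (rule norm_le_inv[OF elim])
          then have "1 / t \<le> opnorm (matrix_inv g)"
            unfolding t_def using t[unfolded t_def] by (simp add: field_simps)
          also have "\<dots> \<le> Nmat g" unfolding Nmat_def by simp
          finally show ?thesis .
        qed
        have it1: "1 / t > 1" using t t1 by simp
        have "w g = (1 / t) powr (- s)" unfolding wt using t by (simp add: powr_divide powr_minus_divide)
        also have "\<dots> \<le> Nmat g powr (- s)" using s it it1 t by (intro powr_mono2) auto
        also have "\<dots> \<le> Nmat g powr \<alpha>" using al it it1 by (intro powr_mono) auto
        finally have "w g - min (w g) 1 \<le> Nmat g powr \<alpha>" using w1 by simp
        then show ?thesis by (rule ennreal_leI)
      qed
    qed
  qed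
  finally show ?thesis unfolding w_def by (simp add: add_mono)
qed


theorem lemma3p12:
  fixes \<mu> :: "(real^'n^'n::finite) measure"
  assumes "CARD('n) \<ge> 2"
    and "prob_space \<mu>"
    and "sets \<mu> = sets borel"
    and "AE g in \<mu>. invertible g"
  shows "\<exists>s0>0. \<forall>s \<nu> \<kappa>.
           ((A1 \<mu> \<and> A2 \<mu> \<and> s \<in> I_plus \<mu>) \<or> (A1 \<mu> \<and> A2 \<mu> \<and> A3 \<mu> \<and> -s0 < s \<and> s < 0)) \<longrightarrow>
           eigen \<mu> s \<nu> \<kappa> \<longrightarrow>
           (\<forall>y \<phi>. \<phi> \<in> borel_measurable proj_borel \<longrightarrow> bounded (range \<phi>) \<longrightarrow>
              upsilon s \<nu> y \<phi> = (\<integral>g. g_upsilon g s \<nu> (act (transpose g) y) \<phi> * qstar s \<kappa> \<nu> g y \<partial>\<mu>))"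
proof -
  note pr = assms(2) and ms = assms(3) and inv = assms(4)
  define P where "P = (\<lambda>\<alpha>. 0 < \<alpha> \<and> \<alpha> < 1 \<and> (\<integral>\<^sup>+ g. ennreal (Nmat g powr \<alpha>) \<partial>\<mu>) < \<infinity>)"
  define s0 where "s0 = (if A3 \<mu> then (SOME \<alpha>. P \<alpha>) else 1)"
  have s0A3: "A3 \<mu> \<Longrightarrow> P s0"
    unfolding s0_def A3_def P_def[symmetric] by (simp add: someI_ex)
  have s0pos: "s0 > 0"
    using s0A3 unfolding P_def by (cases "A3 \<mu>") (auto simp: s0_def)
  show ?thesis
  proof (intro exI[of _ s0] conjI s0pos allI impI)
    fix s :: real and \<nu> :: "'n proj measure" and \<kappa> :: real and y :: "'n proj" and \<phi> :: "'n proj \<Rightarrow> real"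
    assume cases: "(A1 \<mu> \<and> A2 \<mu> \<and> s \<in> I_plus \<mu>) \<or> (A1 \<mu> \<and> A2 \<mu> \<and> A3 \<mu> \<and> -s0 < s \<and> s < 0)"
      and eig: "eigen \<mu> s \<nu> \<kappa>"
      and mphi: "\<phi> \<in> borel_measurable proj_borel" and bphi: "bounded (range \<phi>)"
    have "\<exists>K. (\<forall>x. (\<integral>\<^sup>+g. ennreal (exp (s * cocycle g x)) \<partial>\<mu>) \<le> K) \<and> K < top"
    proof (cases "s \<in> I_plus \<mu>")
      case True
      then have s: "s \<ge> 0" and fin: "(\<integral>\<^sup>+ g. ennreal (opnorm g powr s) \<partial>\<mu>) < \<infinity>"
        unfolding I_plus_def by auto
      show ?thesis
      proof (cases "s = 0")
        case True
        then show ?thesis using prob_space.emeasure_space_1[OF pr]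
          by (intro exI[of _ 1]) simp
      next
        case False
        then have "s > 0" using s by simp
        then show ?thesis using nn_bound_pos[OF inv] fin
          by (intro exI[of _ "\<integral>\<^sup>+ g. ennreal (opnorm g powr s) \<partial>\<mu>"]) auto
      qed
    next
      case False
      then have A3: "A3 \<mu>" and s: "-s0 < s" "s < 0" using cases by auto
      have "P s0" by (rule s0A3[OF A3])
      then have fin: "(\<integral>\<^sup>+ g. ennreal (Nmat g powr s0) \<partial>\<mu>) < \<infinity>" unfolding P_def by simp
      show ?thesis
        using nn_bound_neg[OF ms pr inv s(2), of s0] s fin
        by (intro exI[of _ "1 + (\<integral>\<^sup>+ g. ennreal (Nmat g powr s0) \<partial>\<mu>)"]) (auto simp: ennreal_add_less_top)
    qed
    then obtain K where K: "\<And>x. (\<integral>\<^sup>+g. ennreal (exp (s * cocycle g x)) \<partial>\<mu>) \<le> K" and Kfin: "K < top"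
      by blast
    interpret setting \<mu> s \<nu> \<kappa> "enn2real K"
    proof (rule setting.intro)
      show "prob_space \<mu>" by (rule pr)
      show "sets \<mu> = sets borel" by (rule ms)
      show "AE g in \<mu>. invertible g" by (rule inv)
      show "eigen \<mu> s \<nu> \<kappa>" by (rule eig)
      show "integrable \<mu> (\<lambda>g. exp (s * cocycle g x))" for x
        by (rule w_integrable_from_nn(1)[OF ms K Kfin])
      show "(\<integral>g. exp (s * cocycle g x) \<partial>\<mu>) \<le> enn2real K" for x
        by (rule w_integrable_from_nn(2)[OF ms K Kfin])
    qed
    show "upsilon s \<nu> y \<phi> = (\<integral>g. g_upsilon g s \<nu> (act (transpose g) y) \<phi> * qstar s \<kappa> \<nu> g y \<partial>\<mu>)"
      by (rule main[OF mphi bphi])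
  qed
qed


end
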